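(* Let $\tau\in\mathbb{Z}$ and let $m=2^\alpha a$, $l=2^\beta b$ with $a,b$ positive odd integers, $\alpha\geq1$, $\beta\geq0$. Then \[ 2^{2\alpha}\ \Big|\ (-1)^{m\tau+m+l}\binom{m}{l}\binom{m\tau+l-1}{m-1}-(-1)^{\frac{m\tau+m+l}{2}}\binom{m/2}{l/2}\binom{\frac{m\tau+l}{2}-1}{\frac{m}{2}-1}, \] where for $\beta=0$ the second term is set to zero.
   Context: Binomial coefficients with negative top argument are defined by $\binom{n}{k}=(-1)^k\binom{-n+k-1}{k}$ for $n<0$, $k\geq0$; for $n\geq0$ they are the usual ones (zero when $k>n$). *)

theory Defs
  imports Main
begin

definition ibinom :: "int \<Rightarrow> nat \<Rightarrow> int" where
  "ibinom n k = (if n \<ge> 0 then int (nat n choose k)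
                 else (-1) ^ k * int (nat (- n + int k - 1) choose k))"

definition neg1pow :: "int \<Rightarrow> int" where
  "neg1pow e = (if even e then 1 else -1)"

end

theory Submission
  imports Defs "HOL-Computational_Algebra.Polynomial" "HOL-Number_Theory.Cong"
begin


lemma taylor1: "\<exists>r. poly p (x+h) = poly p x + h * poly (pderiv p) x + h^2 * (r::int)"
proof (induction p)
  case 0 then show ?case by simp
next
  case (pCons a q)
  then obtain r where r: "poly q (x+h) = poly q x + h * poly (pderiv q) x + h^2 * r" by blast
  have "poly (pCons a q) (x+h) = a + (x+h) * poly q (x+h)" by simp
  also have "\<dots> = a + (x+h) * (poly q x + h * poly (pderiv q) x + h^2 * r)" by (simp only: r)
  also have "\<dots> = poly (pCons a q) x + h * poly (pderiv (pCons a q)) x + h^2 * (poly (pderiv q) x + (x+h)*r)"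
    by (simp add: pderiv_pCons algebra_simps power2_eq_square)
  finally show ?case by blast
qed

definition Qp :: "nat \<Rightarrow> int poly" where
  "Qp e = (\<Prod>i<(2::nat)^e. [:2*int i+1, 1:])"

lemma poly_Qp: "poly (Qp e) x = (\<Prod>i<(2::nat)^e. x + 2*int i + 1)"
  by (simp add: Qp_def poly_prod algebra_simps)

lemma Qp_shift: "poly (Qp e) (x+2) * (x+1) = poly (Qp e) x * (x + 1 + 2*2^e)"
proof -
  have e1: "(\<Prod>i<Suc (2^e). x + 2*int i + 1) = (x+1) * (\<Prod>i<2^e. (x+2) + 2*int i + 1)"
    by (subst prod.lessThan_Suc_shift) (simp add: algebra_simps)
  have e2: "(\<Prod>i<Suc (2^e). x + 2*int i + 1) = (\<Prod>i<2^e. x + 2*int i + 1) * (x + 1 + 2*2^e)"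
    by (simp add: algebra_simps)
  show ?thesis unfolding poly_Qp using e1 e2 by (simp add: mult.commute)
qed

lemma odd_coprime_2pow: "odd (y::int) \<Longrightarrow> coprime (2^n) y"
  by (simp add: coprime_commute)

lemma dvd_odd_cancel: "odd (y::int) \<Longrightarrow> (2^n) dvd (y * z) \<Longrightarrow> (2^n) dvd z"
  using odd_coprime_2pow coprime_dvd_mult_right_iff by blast

lemma Qp_shift_poly: "pcompose (Qp e) [:2,1:] * [:1,1:] = Qp e * [:1+2*2^e, 1:]"
proof -
  have "poly (pcompose (Qp e) [:2,1:] * [:1,1:]) x = poly (Qp e * [:1+2*2^e, 1:]) x" for x
    using Qp_shift[of e x] by (simp add: poly_pcompose algebra_simps)
  then show ?thesis using poly_eq_poly_eq_iff by blast
qed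

lemma Qp_deriv_shift:
  assumes "even x"
  shows "(2::int)^(Suc e) dvd poly (pderiv (Qp e)) (x+2) - poly (pderiv (Qp e)) x"
proof -
  define Q where "Q = Qp e"
  define D where "D = pderiv Q"
  have "pderiv (pcompose Q [:2,1:] * [:1,1:]) = pderiv (Q * [:1+2*2^e, 1:])"
    using Qp_shift_poly unfolding Q_def by simp
  then have "poly (pderiv (pcompose Q [:2,1:] * [:1,1:])) x = poly (pderiv (Q * [:1+2*2^e, 1:])) x"
    by simp
  moreover have "pderiv [:(1::int),1:] = 1" "pderiv [:(2::int),1:] = 1" "pderiv [:1+2*2^e,(1::int):] = 1"
    by (simp_all add: pderiv_pCons)
  ultimately have "poly (pcompose Q [:2,1:] * 1 + [:1,1:] * (pcompose (pderiv Q) [:2,1:] * 1)) x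
     = poly (Q * 1 + [:1+2*2^e, 1:] * pderiv Q) x"
    by (simp only: pderiv_mult pderiv_pcompose)
  then have eq: "poly Q (x+2) + (x+1) * poly D (x+2) = poly Q x + (x + 1 + 2*2^e) * poly D x"
    by (simp add: poly_pcompose D_def algebra_simps)
  have s: "poly Q (x+2) * (x+1) = poly Q x * (x + 1 + 2*2^e)" using Qp_shift unfolding Q_def .
  have o: "odd (x+1)" using assms by simp
  have "(x+1) * (poly Q (x+2) - poly Q x) = 2^Suc e * poly Q x" using s by (simp add: algebra_simps)
  then have "(2::int)^Suc e dvd (x+1) * (poly Q (x+2) - poly Q x)" by simp
  then have d1: "(2::int)^Suc e dvd poly Q (x+2) - poly Q x" using dvd_odd_cancel[OF o] by blast
  have "(x+1) * (poly D (x+2) - poly D x) = 2^Suc e * poly D x - (poly Q (x+2) - poly Q x)"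
    using eq by (simp add: algebra_simps)
  also have "(2::int)^Suc e dvd \<dots>" using d1 by simp
  finally show ?thesis using dvd_odd_cancel[OF o] unfolding D_def Q_def by blast
qed

lemma Qp_even:
  assumes "e \<ge> 1"
  shows "poly (Qp e) (-(2^e) + y) = poly (Qp e) (-(2^e) - y)"
proof -
  define K :: nat where "K = 2^e"
  have Ke: "even K" using assms unfolding K_def by (simp add: even_power)
  have "(\<Prod>i<K. -int K - y + 2*int i + 1) = (\<Prod>i<K. -int K - y + 2*int (K - Suc i) + 1)"
    by (rule prod.nat_diff_reindex[symmetric])
  also have "\<dots> = (\<Prod>i<K. (-1) * (-int K + y + 2*int i + 1))"
    by (rule prod.cong) (auto simp: of_nat_diff algebra_simps)
  also have "\<dots> = (-1)^K * (\<Prod>i<K. -int K + y + 2*int i + 1)"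
    by (simp only: prod.distrib prod_constant card_lessThan)
  also have "\<dots> = (\<Prod>i<K. -int K + y + 2*int i + 1)" using Ke by simp
  finally show ?thesis unfolding poly_Qp K_def by (simp add: algebra_simps)
qed

lemma Qp_deriv_center:
  assumes "e \<ge> 1"
  shows "(2::int)^(Suc e) dvd poly (pderiv (Qp e)) (-(2^e))"
proof -
  define h :: int where "h = 2^(e+2)"
  define D where "D = poly (pderiv (Qp e)) (-(2^e))"
  obtain r1 where r1: "poly (Qp e) (-(2^e) + h) = poly (Qp e) (-(2^e)) + h * D + h^2 * r1"
    using taylor1 unfolding D_def by blast
  obtain r2 where r2: "poly (Qp e) (-(2^e) + (-h)) = poly (Qp e) (-(2^e)) + (-h) * D + (-h)^2 * r2"
    using taylor1 unfolding D_def by blast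
  have "poly (Qp e) (-(2^e) + h) = poly (Qp e) (-(2^e) + (-h))"
    using Qp_even[OF assms, of h] by simp
  then have "h * (2 * D) = h * (h * (r2 - r1))" using r1 r2 by (simp add: algebra_simps power2_eq_square)
  then have "2 * D = h * (r2 - r1)" unfolding h_def by simp
  then have "2 * D = 2 * (2^Suc e * (r2 - r1))" unfolding h_def by (simp add: power_Suc)
  then have "D = 2^Suc e * (r2 - r1)" by simp
  then show ?thesis unfolding D_def by simp
qed


lemma Qp_deriv_even:
  assumes "e \<ge> 1" "even x"
  shows "(2::int)^(Suc e) dvd poly (pderiv (Qp e)) x"
proof -
  have up: "(2::int)^(Suc e) dvd poly (pderiv (Qp e)) (-(2^e) + 2 * int n)" for n
  proof (induction n)
    case 0 then show ?case using Qp_deriv_center[OF assms(1)] by simp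
  next
    case (Suc n)
    have "even (-(2^e) + 2 * int n :: int)" using assms(1) by simp
    note H1 = Qp_deriv_shift[OF this, of e]
    have H2: "poly (pderiv (Qp e)) (-(2^e) + 2 * int (Suc n)) = (poly (pderiv (Qp e)) ((-(2^e) + 2 * int n) + 2) - poly (pderiv (Qp e)) (-(2^e) + 2 * int n)) + poly (pderiv (Qp e)) (-(2^e) + 2 * int n)"
      by (simp add: algebra_simps)
    show ?case using dvd_add[OF H1 Suc] H2 by simp
  qed
  have down: "(2::int)^(Suc e) dvd poly (pderiv (Qp e)) (-(2^e) - 2 * int n)" for n
  proof (induction n)
    case 0 then show ?case using Qp_deriv_center[OF assms(1)] by simp
  next
    case (Suc n)
    define z where "z = (-(2^e) - 2 * int (Suc n) :: int)"
    have "even z" using assms(1) unfolding z_def by simp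
    note H1 = Qp_deriv_shift[OF this, of e]
    have H2: "z + 2 = -(2^e) - 2 * int n" unfolding z_def by simp
    have "(2::int)^(Suc e) dvd poly (pderiv (Qp e)) z" using dvd_diff[OF Suc[folded H2] H1] by simp
    then show ?case unfolding z_def .
  qed
  obtain j where j: "x = 2 * j" using assms(2) by (elim evenE)
  define t where "t = j + 2^(e-1)"
  have "(2::int)^e = 2 * 2^(e-1)" using assms(1) by (cases e) auto
  then have xt: "x = -(2^e) + 2 * t" unfolding t_def j by simp
  show ?thesis
  proof (cases "t \<ge> 0")
    case True
    then have "x = -(2^e) + 2 * int (nat t)" using xt by simp
    then show ?thesis using up[of "nat t"] by simp
  next
    case False
    then have "x = -(2^e) - 2 * int (nat (-t))" using xt by simp
    then show ?thesis using down[of "nat (-t)"] by simp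
  qed
qed

lemma Qp_cong:
  assumes "e \<ge> 1" "even x"
  shows "(2::int)^(2*e+2) dvd poly (Qp e) (x + 2^(Suc e) * c) - poly (Qp e) x"
proof -
  define h :: int where "h = 2^(Suc e) * c"
  obtain r where r: "poly (Qp e) (x + h) = poly (Qp e) x + h * poly (pderiv (Qp e)) x + h^2 * r"
    using taylor1 by blast
  obtain d where d: "poly (pderiv (Qp e)) x = 2^Suc e * d" using Qp_deriv_even[OF assms] by blast
  have p: "(2::int)^(2*e+2) = 2^Suc e * 2^Suc e" by (simp flip: power_add)
  have "poly (Qp e) (x + h) - poly (Qp e) x = h * (2^Suc e * d) + h^2 * r" using r d by simp
  also have "\<dots> = 2^(2*e+2) * (c * d + c^2 * r)"
    unfolding p h_def by (simp add: algebra_simps power2_eq_square)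
  finally show ?thesis unfolding h_def by simp
qed


definition Pp :: "nat \<Rightarrow> int \<Rightarrow> int" where
  "Pp u N = (\<Prod>j<u. 2*N - 2*int j - 1)"

lemma Pp_rev: "Pp u N = (\<Prod>i<u. 2*(N - int u) + 2*int i + 1)"
proof -
  have "Pp u N = (\<Prod>i<u. 2*N - 2*int (u - Suc i) - 1)"
    unfolding Pp_def by (rule prod.nat_diff_reindex[symmetric])
  also have "\<dots> = (\<Prod>i<u. 2*(N - int u) + 2*int i + 1)"
    by (rule prod.cong) (auto simp: of_nat_diff algebra_simps)
  finally show ?thesis .
qed

lemma Pp_blocks:
  "Pp (2^e * a) N = (\<Prod>b<a. poly (Qp e) (2*(N - int (2^e*a)) + 2^(Suc e) * int b))"
proof -
  define K :: nat where "K = 2^e"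
  define g where "g = (\<lambda>i::nat. 2*(N - int (K*a)) + 2*int i + 1)"
  have "Pp (K*a) N = (\<Prod>i<a*K. g i)" unfolding Pp_rev g_def by (simp add: mult.commute)
  also have "\<dots> = (\<Prod>b<a. \<Prod>i\<in>{b*K..<b*K+K}. g i)" by (rule prod.nat_group[symmetric])
  also have "\<dots> = (\<Prod>b<a. poly (Qp e) (2*(N - int (K*a)) + 2^(Suc e) * int b))"
  proof (rule prod.cong[OF refl])
    fix b
    have "(\<Prod>i\<in>{b*K..<b*K+K}. g i) = (\<Prod>i\<in>{0+b*K..<K+b*K}. g i)" by (simp add: add.commute)
    also have "\<dots> = (\<Prod>i\<in>{0..<K}. g (i + b*K))" by (rule prod.shift_bounds_nat_ivl)
    also have "\<dots> = poly (Qp e) (2*(N - int (K*a)) + 2^(Suc e) * int b)"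
      unfolding poly_Qp K_def[symmetric] g_def atLeast0LessThan
      by (rule prod.cong) (auto simp: K_def algebra_simps)
    finally show "(\<Prod>i\<in>{b*K..<b*K+K}. g i) = poly (Qp e) (2*(N - int (K*a)) + 2^(Suc e) * int b)" .
  qed
  finally show ?thesis unfolding K_def .
qed

lemma Pp_shift_e:
  assumes "e \<ge> 1"
  shows "[Pp (2^e * a) (N + int (2^e*a)) = Pp (2^e * a) N] (mod 2^(2*e+2))"
proof -
  have "[poly (Qp e) (2*(N + int (2^e*a) - int (2^e*a)) + 2^(Suc e) * int b)
        = poly (Qp e) (2*(N - int (2^e*a)) + 2^(Suc e) * int b)] (mod 2^(2*e+2))" for b
  proof -
    define x where "x = 2*(N - int (2^e*a)) + 2^(Suc e) * int b"
    have ev: "even x" unfolding x_def by simp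
    have "2*(N + int (2^e*a) - int (2^e*a)) + 2^(Suc e) * int b = x + 2^(Suc e) * int a"
      unfolding x_def by (simp add: algebra_simps)
    then show ?thesis using Qp_cong[OF assms ev, of "int a"] unfolding x_def[symmetric]
      by (simp add: cong_iff_dvd_diff)
  qed
  then show ?thesis unfolding Pp_blocks by (intro cong_prod) auto
qed

lemma Pp_shift_0:
  "[Pp u (N + int u) = (-1)^u * Pp u N] (mod 4)"
proof -
  have "[2*(N + int u) - 2*int j - 1 = (-1)^u * (2*N - 2*int j - 1)] (mod 4)" for j
  proof (cases "even u")
    case True
    then obtain k where k: "u = 2*k" by blast
    have s: "(-1::int)^u = 1" using True by simp
    have "2*(N + int u) - 2*int j - 1 - (-1)^u * (2*N - 2*int j - 1) = 4 * int k" (is "?d = _")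
      unfolding s using k by (simp add: algebra_simps)
    then show ?thesis unfolding cong_iff_dvd_diff by (metis dvd_triv_left)
  next
    case False
    then obtain k where k: "u = 2*k+1" using oddE by blast
    have "2*(N + int u) - 2*int j - 1 - (-1)^u * (2*N - 2*int j - 1) = 4 * (N + int k - int j)"
      using False k by (simp add: algebra_simps)
    then show ?thesis unfolding cong_iff_dvd_diff by (metis dvd_triv_left)
  qed
  then have "[Pp u (N + int u) = (\<Prod>j<u. (-1)^u * (2*N - 2*int j - 1))] (mod 4)"
    unfolding Pp_def by (intro cong_prod) auto
  also have "(\<Prod>j<u. (-1)^u * (2*N - 2*int j - 1)) = ((-1)^u)^u * Pp u N"
    unfolding Pp_def by (simp add: prod.distrib)
  also have "((-1::int)^u)^u = (-1)^u"
    by (cases "even u") (simp_all add: power_mult[symmetric])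
  finally show ?thesis .
qed

lemma Pkey:
  assumes "2^e dvd u"
  shows "[Pp u (N + int u) = (-1)^u * Pp u N] (mod 2^(2*e+2))"
proof (cases "e = 0")
  case True then show ?thesis using Pp_shift_0[of u N] by simp
next
  case False
  then have e1: "e \<ge> 1" by simp
  obtain a where a: "u = 2^e * a" using assms by blast
  have "even u" using a e1 by (simp add: even_power)
  then show ?thesis using Pp_shift_e[OF e1, of a N] a by simp
qed

lemma Piter:
  assumes "2^e dvd u"
  shows "[Pp u (N + int u * int n) = (-1)^(u*n) * Pp u N] (mod 2^(2*e+2))"
proof (induction n)
  case 0 then show ?case by simp
next
  case (Suc n)
  have "[Pp u ((N + int u * int n) + int u) = (-1)^u * Pp u (N + int u * int n)] (mod 2^(2*e+2))"
    by (rule Pkey[OF assms])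
  also have "[(-1)^u * Pp u (N + int u * int n) = (-1)^u * ((-1)^(u*n) * Pp u N)] (mod 2^(2*e+2))"
    by (rule cong_scalar_left[OF Suc])
  finally show ?case by (simp add: algebra_simps power_add)
qed

lemma Pneg:
  assumes "2^e dvd u"
  shows "[Pp u (N - int u * int n) = (-1)^(u*n) * Pp u N] (mod 2^(2*e+2))"
proof -
  have "[Pp u ((N - int u * int n) + int u * int n) = (-1)^(u*n) * Pp u (N - int u * int n)] (mod 2^(2*e+2))"
    by (rule Piter[OF assms])
  moreover have eq: "(N - int u * int n) + int u * int n = N" by simp
  ultimately have c: "[(-1)^(u*n) * Pp u N = (-1)^(u*n) * ((-1)^(u*n) * Pp u (N - int u * int n))] (mod 2^(2*e+2))"
    using cong_scalar_left by metis
  have sq: "(-1::int)^(u*n) * (-1)^(u*n) = 1" by (simp flip: power_add)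
  have "(-1)^(u*n) * ((-1)^(u*n) * Pp u (N - int u * int n)) = Pp u (N - int u * int n)"
    by (simp only: mult.assoc[symmetric] sq mult_1)
  with c show ?thesis by (metis cong_sym)
qed

lemma Pint:
  assumes "2^e dvd u"
  shows "[Pp u (N + int u * t) = (-1)^(u * nat \<bar>t\<bar>) * Pp u N] (mod 2^(2*e+2))"
proof (cases "t \<ge> 0")
  case True
  then show ?thesis using Piter[OF assms, of N "nat t"] by simp
next
  case False
  then have "N + int u * t = N - int u * int (nat (-t))" by simp
  then show ?thesis using Pneg[OF assms, of N "nat (-t)"] False by simp
qed



definition Od :: "nat \<Rightarrow> nat" where "Od k = (\<Prod>i<k. 2*i+1)"

lemma Od_Suc: "Od (Suc k) = Od k * (2*k+1)" by (simp add: Od_def)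

lemma Od_odd: "odd (Od k)"
  by (induction k) (simp_all add: Od_Suc Od_def[of 0])

lemma fact_double: "fact (2*k) = (2^k * fact k * Od k :: nat)"
proof (induction k)
  case 0 then show ?case by (simp add: Od_def)
next
  case (Suc k)
  have "fact (2*Suc k) = (fact (2*k) * ((2*k+1) * (2*k+2)) :: nat)"
    by (simp add: algebra_simps)
  also have "\<dots> = 2^Suc k * fact (Suc k) * Od (Suc k)"
    unfolding Suc Od_Suc by (simp add: algebra_simps)
  finally show ?case .
qed

lemma fact_double1: "fact (2*k+1) = (2^k * fact k * Od (Suc k) :: nat)"
  using fact_double[of k] by (simp add: Od_Suc algebra_simps)

lemma binom_double:
  assumes "v \<le> u"
  shows "(2*u choose 2*v) * Od v * Od (u - v) = (u choose v) * Od u"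
proof -
  define w where "w = u - v"
  have u: "u = v + w" using assms unfolding w_def by simp
  have "fact (2*v) * fact (2*u - 2*v) * (2*u choose 2*v) = (fact (2*u) :: nat)"
    by (rule binomial_fact_lemma) (use assms in simp)
  then have "2^v * fact v * Od v * (2^w * fact w * Od w) * (2*u choose 2*v) = 2^u * fact u * Od u"
    unfolding fact_double[symmetric] by (simp add: u algebra_simps flip: mult_2)
  moreover have "fact v * fact w * (u choose v) = fact u"
    using binomial_fact_lemma[of v u] assms by (simp add: u)
  ultimately have "2^u * (fact v * fact w * ((2*u choose 2*v) * Od v * Od w)) = 2^u * (fact v * fact w * ((u choose v) * Od u))"
    by (simp add: u power_add algebra_simps)
  then have "fact v * fact w * ((2*u choose 2*v) * Od v * Od w) = fact v * fact w * ((u choose v) * Od u)"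
    by (rule mult_left_cancel[THEN iffD1, rotated]) simp
  then show ?thesis unfolding w_def by (rule mult_left_cancel[THEN iffD1, rotated]) simp
qed

lemma Pp_base:
  "Pp (v + w) (int v) = (-1)^w * int (Od v) * int (Od w)"
proof (induction w)
  case 0
  have "Pp v (int v) = (\<Prod>i<v. 2*int i + 1)" unfolding Pp_rev by simp
  then show ?case by (simp add: Od_def algebra_simps)
next
  case (Suc w)
  have "Pp (v + Suc w) (int v) = Pp (v + w) (int v) * (2*int v - 2*int (v+w) - 1)"
    by (simp add: Pp_def)
  also have "\<dots> = (-1)^Suc w * int (Od v) * int (Od (Suc w))"
    unfolding Suc Od_Suc by (simp add: algebra_simps)
  finally show ?case .
qed

lemma ibinom_real: "real_of_int (ibinom n k) = (real_of_int n) gchoose k"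
proof (cases "n \<ge> 0")
  case True
  then have "real_of_int (ibinom n k) = real (nat n choose k)" by (simp add: ibinom_def)
  also have "\<dots> = real (nat n) gchoose k" by (rule binomial_gbinomial)
  finally show ?thesis using True by simp
next
  case False
  then have "real_of_int (ibinom n k) = (-1)^k * real (nat (-n + int k - 1) choose k)"
    by (simp add: ibinom_def)
  also have "\<dots> = (-1)^k * (real (nat (-n + int k - 1)) gchoose k)" by (simp add: binomial_gbinomial)
  also have "real (nat (-n + int k - 1)) = of_nat k - real_of_int n - 1" using False by simp
  also have "(-1)^k * ((of_nat k - real_of_int n - 1) gchoose k) = real_of_int n gchoose k"
    by (rule gbinomial_negated_upper[symmetric])
  finally show ?thesis .
qed

lemma prod_even_odd:
  "(\<Prod>i<2*k+1. f i) = (\<Prod>j<Suc k. f (2*j)) * (\<Prod>j<k. f (2*j+1 :: nat)) "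
proof (induction k)
  case 0 then show ?case by simp
next
  case (Suc k)
  have "(\<Prod>i<2*Suc k+1. f i) = (\<Prod>i<2*k+1. f i) * f (2*k+1) * f (2*k+2)"
    by (simp add: algebra_simps)
  then show ?case unfolding Suc by (simp add: algebra_simps)
qed

lemma gbinom_double:
  "((2*real_of_int N - 1) gchoose (2*k+1)) * real (Od (Suc k))
    = ((real_of_int N - 1) gchoose k) * real_of_int (Pp (Suc k) N)"
proof -
  define f where "f = (\<lambda>i::nat. 2*real_of_int N - 1 - real i)"
  have "fact (2*k+1) * ((2*real_of_int N - 1) gchoose (2*k+1)) = (\<Prod>i<2*k+1. f i)"
    unfolding gbinomial_mult_fact f_def by (simp add: atLeast0LessThan)
  also have "\<dots> = (\<Prod>j<Suc k. f (2*j)) * (\<Prod>j<k. f (2*j+1))" by (rule prod_even_odd)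
  also have "(\<Prod>j<Suc k. f (2*j)) = real_of_int (Pp (Suc k) N)"
    unfolding Pp_def f_def by (simp add: algebra_simps)
  also have "(\<Prod>j<k. f (2*j+1)) = (\<Prod>j<k. 2 * (real_of_int N - 1 - real j))"
    unfolding f_def by (rule prod.cong) (auto simp: algebra_simps)
  also have "\<dots> = 2^k * (\<Prod>j<k. real_of_int N - 1 - real j)"
    by (simp only: prod.distrib prod_constant card_lessThan)
  also have "(\<Prod>j<k. real_of_int N - 1 - real j) = fact k * ((real_of_int N - 1) gchoose k)"
    unfolding gbinomial_mult_fact by (simp add: atLeast0LessThan)
  finally have e: "fact (2*k+1) * ((2*real_of_int N - 1) gchoose (2*k+1))
     = real_of_int (Pp (Suc k) N) * (2^k * (fact k * ((real_of_int N - 1) gchoose k)))" .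
  have "real (fact (2*k+1)) = 2^k * fact k * real (Od (Suc k))"
    unfolding fact_double1 by simp
  then have "(2^k * fact k) * (((2*real_of_int N - 1) gchoose (2*k+1)) * real (Od (Suc k)))
     = (2^k * fact k) * (((real_of_int N - 1) gchoose k) * real_of_int (Pp (Suc k) N))"
    using e by (simp add: algebra_simps)
  then show ?thesis by simp
qed



lemma ibinom_nat: "ibinom (int n) k = int (n choose k)"
  by (simp add: ibinom_def)

lemma gbinom_double_int:
  assumes "u \<ge> 1"
  shows "ibinom (2*N - 1) (2*u - 1) * int (Od u) = ibinom (N - 1) (u - 1) * Pp u N"
proof -
  obtain k where k: "u = Suc k" using assms by (cases u) auto
  have "real_of_int (ibinom (2*N - 1) (2*u - 1) * int (Od u)) = real_of_int (ibinom (N - 1) (u - 1) * Pp u N)"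
    using gbinom_double[of N k] unfolding k by (simp add: ibinom_real)
  then show ?thesis by (simp only: of_int_eq_iff)
qed

lemma absorb_int: "int (Suc k) * ibinom n (Suc k) = n * ibinom (n - 1) k"
proof -
  have "real_of_int (int (Suc k) * ibinom n (Suc k)) = real_of_int (n * ibinom (n - 1) k)"
    using gbinomial_absorption[of k "real_of_int n"] by (simp add: ibinom_real)
  then show ?thesis by (simp only: of_int_eq_iff)
qed

lemma neg1pow_cong:
  assumes "even (z1 - z2)"
  shows "neg1pow z1 = neg1pow z2"
proof -
  have "z1 = z2 + (z1 - z2)" by simp
  then have "even z1 \<longleftrightarrow> even z2" using assms by (metis even_add)
  then show ?thesis unfolding neg1pow_def by simp
qed

lemma neg1pow_nat: "neg1pow (int n) = (-1)^n"
  unfolding neg1pow_def by simp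

lemma core:
  fixes \<tau> :: int and u v e a :: nat
  assumes u: "u = 2^e * a" and a: "a > 0"
  defines "N \<equiv> int u * \<tau> + int v"
  shows "(2::int)^(2*e+2) dvd ibinom (2*int u) (2*v) * ibinom (2*N - 1) (2*u - 1)
     - neg1pow (int u * \<tau> + int u + int v) * ibinom (int u) v * ibinom (N - 1) (u - 1)"
proof (cases "v \<le> u")
  case False
  then have "ibinom (int u) v = 0" "ibinom (2*int u) (2*v) = 0"
    using ibinom_nat[of u v] ibinom_nat[of "2*u" "2*v"] by simp_all
  then show ?thesis by simp
next
  case True
  define w where "w = u - v"
  have uw: "u = v + w" using True unfolding w_def by simp
  have u1: "u \<ge> 1" using u a by simp
  define X where "X = ibinom (2*int u) (2*v)"
  define Y where "Y = ibinom (2*N - 1) (2*u - 1)"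
  define A where "A = ibinom (int u) v"
  define B where "B = ibinom (N - 1) (u - 1)"
  define Om where "Om = int (Od v) * int (Od w)"
  have h1: "X * Om = A * int (Od u)"
    using binom_double[OF True] unfolding X_def A_def Om_def w_def
    by (metis ibinom_nat of_nat_mult mult.assoc of_nat_numeral)
  have h2: "Y * int (Od u) = B * Pp u N" unfolding Y_def B_def by (rule gbinom_double_int[OF u1])
  have h3: "(X * Y) * Om = (A * B) * Pp u N"
    using h1 h2 by (metis mult.assoc mult.commute)
  have "2^e dvd u" using u by simp
  from Pint[OF this, of "int v" \<tau>]
  have h4: "[Pp u N = (-1)^(u * nat \<bar>\<tau>\<bar>) * Pp u (int v)] (mod 2^(2*e+2))"
    unfolding N_def by (simp add: add.commute)
  have pb: "Pp u (int v) = (-1)^w * Om" unfolding Om_def uw by (simp add: Pp_base mult.assoc)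
  have "[(X * Y) * Om = (A * B) * ((-1)^(u * nat \<bar>\<tau>\<bar>) * ((-1)^w * Om))] (mod 2^(2*e+2))"
    unfolding h3 pb[symmetric] by (rule cong_scalar_left[OF h4])
  then have "[(X * Y) * Om = ((A * B) * (-1)^(u * nat \<bar>\<tau>\<bar> + w)) * Om] (mod 2^(2*e+2))"
    by (simp add: power_add algebra_simps)
  moreover have "coprime Om (2^(2*e+2))"
  proof -
    have "odd Om" unfolding Om_def using Od_odd[of v] Od_odd[of w] by simp
    then show ?thesis using odd_coprime_2pow coprime_commute by blast
  qed
  ultimately have c: "[X * Y = (A * B) * (-1)^(u * nat \<bar>\<tau>\<bar> + w)] (mod 2^(2*e+2))"
    using cong_mult_rcancel by blast
  have "neg1pow (int u * \<tau> + int u + int v) = neg1pow (int (u * nat \<bar>\<tau>\<bar> + w))"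
  proof (rule neg1pow_cong)
    have eq: "int u * \<tau> + int u + int v - int (u * nat \<bar>\<tau>\<bar> + w) = int u * (\<tau> - \<bar>\<tau>\<bar>) + 2 * int v"
      using True unfolding w_def by (simp add: algebra_simps of_nat_diff)
    have ev: "even (\<tau> - \<bar>\<tau>\<bar>)" by (cases "\<tau> \<ge> 0") simp_all
    have "even (int u * (\<tau> - \<bar>\<tau>\<bar>))" using ev by (rule dvd_mult)
    then have "even (int u * (\<tau> - \<bar>\<tau>\<bar>) + 2 * int v)" by simp
    then show "even (int u * \<tau> + int u + int v - int (u * nat \<bar>\<tau>\<bar> + w))" unfolding eq .
  qed
  then have s: "neg1pow (int u * \<tau> + int u + int v) = (-1)^(u * nat \<bar>\<tau>\<bar> + w)"
    by (simp only: neg1pow_nat)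
  show ?thesis using c unfolding s X_def[symmetric] Y_def[symmetric] A_def[symmetric] B_def[symmetric]
    by (simp add: cong_iff_dvd_diff algebra_simps)
qed



lemma odd_case:
  fixes \<tau> :: int and m l a \<alpha> :: nat
  assumes m: "m = 2^\<alpha> * a" and a: "a > 0" and al: "\<alpha> \<ge> 1" and l: "odd l"
  shows "(2::int)^(2*\<alpha>) dvd neg1pow (int m * \<tau> + int m + int l) * ibinom (int m) l
       * ibinom (int m * \<tau> + int l - 1) (m - 1)"
proof -
  have "m \<noteq> 0" using m a by simp
  then obtain k where k: "m = Suc k" using not0_implies_Suc by blast
  obtain j where j: "l = Suc j" using l by (cases l) auto
  have me: "even m" using m al by (simp add: even_power)
  have dm: "(2::int)^\<alpha> dvd int m" using m by simp
  have "Suc k * (k choose j) = (Suc k choose Suc j) * Suc j" by (rule Suc_times_binomial_eq)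
  then have "int l * int (m choose l) = int m * int (k choose j)"
    unfolding k j by (metis of_nat_mult mult.commute)
  then have "(2::int)^\<alpha> dvd int l * int (m choose l)" using dm by simp
  then have d1: "(2::int)^\<alpha> dvd ibinom (int m) l"
    unfolding ibinom_nat by (rule dvd_odd_cancel[rotated]) (use l in simp)
  define n where "n = int m * \<tau> + int l"
  have no: "odd n" unfolding n_def using me l by simp
  have "int (Suc k) * ibinom n (Suc k) = n * ibinom (n - 1) k" by (rule absorb_int)
  then have "(2::int)^\<alpha> dvd n * ibinom (n - 1) k" using dm unfolding k by (metis dvd_mult2)
  then have "(2::int)^\<alpha> dvd ibinom (n - 1) k" by (rule dvd_odd_cancel[OF no])
  then have d2: "(2::int)^\<alpha> dvd ibinom (int m * \<tau> + int l - 1) (m - 1)"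
    unfolding n_def k by simp
  have "(2::int)^\<alpha> * 2^\<alpha> dvd ibinom (int m) l * ibinom (int m * \<tau> + int l - 1) (m - 1)"
    using d1 d2 by (rule mult_dvd_mono)
  then have "(2::int)^(2*\<alpha>) dvd ibinom (int m) l * ibinom (int m * \<tau> + int l - 1) (m - 1)"
    by (simp add: mult_2 power_add)
  then show ?thesis by (simp add: mult.assoc)
qed

theorem lemma4p8:
  fixes \<tau> :: int and m l a b \<alpha> \<beta> :: nat
  assumes "odd a" "odd b" "a > 0" "b > 0" "\<alpha> \<ge> 1"
    and "m = 2 ^ \<alpha> * a" and "l = 2 ^ \<beta> * b"
  shows "(2::int) ^ (2 * \<alpha>) dvd
    (neg1pow (int m * \<tau> + int m + int l) * ibinom (int m) l
       * ibinom (int m * \<tau> + int l - 1) (m - 1)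
     - (if \<beta> = 0 then 0 else
         neg1pow ((int m * \<tau> + int m + int l) div 2) * ibinom (int (m div 2)) (l div 2)
         * ibinom ((int m * \<tau> + int l) div 2 - 1) (m div 2 - 1)))"
proof (cases "\<beta> = 0")
  case True
  then have "odd l" using assms by simp
  then show ?thesis using odd_case[OF assms(6,3,5), of l \<tau>] True by simp
next
  case False
  define v where "v = 2^(\<beta>-1) * b"
  define u where "u = 2^(\<alpha>-1) * a"
  define N where "N = int u * \<tau> + int v"
  have lv: "l = 2 * v" unfolding v_def assms(7) using False
    by (metis mult.assoc power_eq_if)
  have mu: "m = 2 * u" unfolding u_def assms(6) using assms(5)
    by (metis mult.assoc power_eq_if not_one_le_zero)
  have e1: "neg1pow (int m * \<tau> + int m + int l) = 1"
    unfolding neg1pow_def mu lv by simp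
  have e2: "int m * \<tau> + int l - 1 = 2 * N - 1" unfolding N_def mu lv by simp
  have e3: "(int m * \<tau> + int m + int l) div 2 = int u * \<tau> + int u + int v"
    unfolding mu lv by simp
  have e4: "(int m * \<tau> + int l) div 2 - 1 = N - 1" unfolding N_def mu lv by simp
  have e5: "2 * \<alpha> = 2 * (\<alpha> - 1) + 2" using assms(5) by simp
  have c: "(2::int)^(2*(\<alpha>-1)+2) dvd ibinom (2*int u) (2*v) * ibinom (2*N - 1) (2*u - 1)
     - neg1pow (int u * \<tau> + int u + int v) * ibinom (int u) v * ibinom (N - 1) (u - 1)"
    unfolding N_def by (rule core[OF u_def assms(3)])
  show ?thesis unfolding e1 e2 e3 e4 e5 using c False by (simp add: mu lv)
qed


end
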